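(* Let $K(1,3)$ be the Kolakoski sequence over $\{1,3\}$ and let $B_n$ ($n\ge1$) be as defined in the context. Then for all $n\ge 1$: (i) $B_n$ is the prefix of $K(1,3)$ of length $|B_n|$; (ii) $B_{n+1}=\mathcal{G}(R(B_n),1)$. Consequently $K(1,3)=\lim_{n\to\infty}B_n$.
   Context: $K(1,3)$ is the unique infinite sequence over the alphabet $\{1,3\}$ beginning with $1$ that equals its own run-length encoding, i.e. the sequence of lengths of its maximal runs of equal symbols is the sequence itself ($K(1,3)=1\,3\,3\,3\,1\,1\,1\,3\,3\,3\,1\,3\dots$). Generation operator: for a finite vector $R=\langle r_1,\dots,r_m\rangle$ of positive integers and $s\in\{1,3\}$, $\mathcal{G}(R,s)= s^{r_1}\,(4-s)^{r_2}\,s^{r_3}\cdots$ (the $i$-th run consists of $r_i$ copies of $s$ if $i$ is odd and of $4-s$ if $i$ is even), of length $\sum_i r_i$. For a finite word $W$ over $\{1,3\}$, $R(W)$ denotes $W$ itself regarded as a vector of positive integers. Define $B_1=\mathcal{G}(\langle 1,3,3,3,1\rangle,1)=1\,3\,3\,3\,1\,1\,1\,3\,3\,3\,1$, $P_1=3$, and for $n\ge1$: $B_{n+1}=B_n\,P_n\,B_n$ (concatenation), $P_{n+1}=\mathcal{G}(R(P_n),3)$. The limit $\lim B_n$ is meaningful since each $B_n$ is a prefix of $B_{n+1}$. *)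

theory Defs
  imports Main "HOL-Library.Infinite_Set"
begin

definition run_starts :: "(nat \<Rightarrow> nat) \<Rightarrow> nat set" where
  "run_starts x = {i. i = 0 \<or> x i \<noteq> x (i - 1)}"

text \<open>Length of the j-th (0-indexed) maximal run, assuming infinitely many runs.\<close>
definition run_length :: "(nat \<Rightarrow> nat) \<Rightarrow> nat \<Rightarrow> nat" where
  "run_length x j = enumerate (run_starts x) (Suc j) - enumerate (run_starts x) j"

definition self_rle :: "(nat \<Rightarrow> nat) \<Rightarrow> bool" where
  "self_rle x \<longleftrightarrow> infinite (run_starts x) \<and> (\<forall>j. run_length x j = x j)"

definition is_K13 :: "(nat \<Rightarrow> nat) \<Rightarrow> bool" where
  "is_K13 x \<longleftrightarrow> (\<forall>i. x i \<in> {1, 3}) \<and> x 0 = 1 \<and> self_rle x"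

definition gen :: "nat list \<Rightarrow> nat \<Rightarrow> nat list" where
  "gen R s = concat (map (\<lambda>i. replicate (R ! i) (if even i then s else 4 - s)) [0..<length R])"

text \<open>bp n = (B_(n+1), P_(n+1)).\<close>
fun bp :: "nat \<Rightarrow> nat list \<times> nat list" where
  "bp 0 = (gen [1,3,3,3,1] 1, [3])"
| "bp (Suc n) = (let (b, p) = bp n in (b @ p @ b, gen p 3))"

definition B :: "nat \<Rightarrow> nat list" where
  "B n = fst (bp (n - 1))"

definition P :: "nat \<Rightarrow> nat list" where
  "P n = snd (bp (n - 1))"

end

theory Submission
  imports Defs
begin

lemma gen_snoc:
  "gen (xs @ [x]) s = gen xs s @ replicate x (if even (length xs) then s else 4 - s)"
proof -
  have "map (\<lambda>i. replicate ((xs @ [x]) ! i) (if even i then s else 4 - s)) [0..<length xs]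
      = map (\<lambda>i. replicate (xs ! i) (if even i then s else 4 - s)) [0..<length xs]"
    by (rule map_cong) (auto simp: nth_append)
  then show ?thesis unfolding gen_def by (simp del: map_eq_conv)
qed

lemma gen_Nil[simp]: "gen [] s = []" by (simp add: gen_def)

lemma gen_append:
  assumes "s \<le> 4"
  shows "gen (u @ v) s = gen u s @ gen v (if even (length u) then s else 4 - s)"
proof (induction v rule: rev_induct)
  case Nil then show ?case by simp
next
  case (snoc x v)
  have "gen (u @ v @ [x]) s = gen (u @ v) s @ replicate x (if even (length u + length v) then s else 4 - s)"
    using gen_snoc[of "u @ v" x s] by simp
  also have "\<dots> = gen u s @ gen (v @ [x]) (if even (length u) then s else 4 - s)"
    using snoc assms by (simp add: gen_snoc)
  finally show ?case by simp
qed

lemma gen_Cons: "s \<le> 4 \<Longrightarrow> gen (x # xs) s = replicate x s @ gen xs (4 - s)"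
  using gen_append[of s "[x]" xs] gen_snoc[of "[]" x s] by simp

lemma length_gen: "length (gen xs s) = sum_list xs"
proof (induction xs rule: rev_induct)
  case Nil then show ?case by simp
next
  case (snoc x xs) then show ?case by (simp add: gen_snoc)
qed

lemma set_gen: "set (gen xs s) \<subseteq> {s, 4 - s}"
proof (induction xs rule: rev_induct)
  case Nil then show ?case by simp
next
  case (snoc x xs) then show ?case by (auto simp: gen_snoc)
qed

lemma odd_sum_list: "set xs \<subseteq> {1, 3::nat} \<Longrightarrow> odd (sum_list xs) = odd (length xs)"
  by (induction xs) auto

lemma bp_props:
  "odd (length (fst (bp k))) \<and> odd (length (snd (bp k))) \<and> set (snd (bp k)) \<subseteq> {1,3}"
proof (induction k)
  case 0 then show ?case by (simp add: gen_def)
next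
  case (Suc k)
  obtain b p where bp: "bp k = (b, p)" by fastforce
  have "set (gen p 3) \<subseteq> {1,3}" using set_gen[of p 3] by auto
  moreover have "odd (length (gen p 3))" using Suc bp by (simp add: length_gen odd_sum_list)
  ultimately show ?case using Suc bp by simp
qed

lemma bp_gen: "fst (bp (Suc k)) = gen (fst (bp k)) 1"
proof (induction k)
  case 0 then show ?case by (simp add: gen_Cons numeral_3_eq_3)
next
  case (Suc k)
  obtain b p where bp: "bp k = (b, p)" by fastforce
  have ob: "odd (length b)" and op: "odd (length p)" using bp_props[of k] bp by auto
  have IH: "b @ p @ b = gen b 1" using Suc bp by simp
  have "gen (b @ p @ b) 1 = gen b 1 @ gen (p @ b) 3"
    using gen_append[of 1 b "p @ b"] ob by simp
  also have "gen (p @ b) 3 = gen p 3 @ gen b 1"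
    using gen_append[of 3 p b] op by simp
  finally show ?case using bp IH by simp
qed

context
  fixes K :: "nat \<Rightarrow> nat"
  assumes K: "is_K13 K"
begin

abbreviation "e \<equiv> enumerate (run_starts K)"

lemma inf_S: "infinite (run_starts K)"
  using K by (simp add: is_K13_def self_rle_def)

lemma K13: "K i \<in> {1,3}" using K by (simp add: is_K13_def)

lemma e0: "e 0 = 0"
  by (simp add: run_starts_def enumerate_0 Least_eq_0)

lemma eSuc: "e (Suc j) = e j + K j"
proof -
  have "run_length K j = K j" using K by (simp add: is_K13_def self_rle_def)
  moreover have "e j < e (Suc j)" using inf_S by simp
  ultimately show ?thesis by (simp add: run_length_def)
qed

lemma not_between: assumes "e j < t" "t < e (Suc j)" shows "t \<notin> run_starts K"
proof
  assume "t \<in> run_starts K"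
  then obtain n where n: "e n = t" using enumerate_Ex[OF inf_S] by blast
  then have "j < n" "n < Suc j" using assms inf_S by auto
  then show False by simp
qed

lemma const_run: "e j + d < e (Suc j) \<Longrightarrow> K (e j + d) = K (e j)"
proof (induction d)
  case 0 then show ?case by simp
next
  case (Suc d)
  have "e j + Suc d \<notin> run_starts K" using not_between[of j "e j + Suc d"] Suc.prems by simp
  then have "K (e j + Suc d) = K (e j + d)" by (simp add: run_starts_def)
  then show ?case using Suc by simp
qed

lemma K_e: "K (e j) = (if even j then 1 else 3)"
proof (induction j)
  case 0 then show ?case using K e0 by (simp add: is_K13_def)
next
  case (Suc j)
  have pos: "e (Suc j) > 0" using eSuc K13[of j] by auto
  have "e (Suc j) \<in> run_starts K" using enumerate_in_set[OF inf_S] .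
  then have ne: "K (e (Suc j)) \<noteq> K (e (Suc j) - 1)" using pos by (simp add: run_starts_def)
  have "K (e j + (K j - 1)) = K (e j)"
    using const_run[of j "K j - 1"] eSuc[of j] K13[of j] by auto
  moreover have "e j + (K j - 1) = e (Suc j) - 1" using eSuc[of j] K13[of j] by auto
  ultimately have "K (e (Suc j) - 1) = K (e j)" by simp
  with ne Suc K13[of "e (Suc j)"] show ?case by auto
qed

lemma map_run: "map K [e j..<e (Suc j)] = replicate (K j) (if even j then 1 else 3)"
proof (rule nth_equalityI)
  show "length (map K [e j..<e (Suc j)]) = length (replicate (K j) (if even j then 1 else 3))"
    using eSuc by simp
next
  fix i assume "i < length (map K [e j..<e (Suc j)])"
  then have i: "e j + i < e (Suc j)" by simp
  then show "map K [e j..<e (Suc j)] ! i = replicate (K j) (if even j then 1 else 3) ! i"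
    using const_run[OF i] K_e[of j] eSuc[of j] by simp
qed

lemma gen_prefix: "gen (map K [0..<m]) 1 = map K [0..<e m]"
proof (induction m)
  case 0 then show ?case using e0 by simp
next
  case (Suc m)
  have "[0..<e (Suc m)] = [0..<e m] @ [e m..<e (Suc m)]"
    using eSuc[of m] upt_add_eq_append[of 0 "e m" "K m"] by simp
  then show ?case using Suc map_run[of m] by (simp add: gen_snoc)
qed

lemma gen_prefix': "L = map K [0..<m] \<Longrightarrow> gen L 1 = map K [0..<length (gen L 1)]"
  using gen_prefix[of m] by simp

end

theorem theorem4p1:
  fixes K :: "nat \<Rightarrow> nat"
  assumes "is_K13 K"
  shows "(\<forall>n\<ge>1. B n = map K [0..<length (B n)] \<and> B (Suc n) = gen (B n) 1)
     \<and> (\<forall>i. \<exists>N. \<forall>n\<ge>N. i < length (B n) \<and> B n ! i = K i)"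
proof -
  note K = assms
  have ii: "B (Suc n) = gen (B n) 1" if "n \<ge> 1" for n
    using that bp_gen[of "n - 1"] by (simp add: B_def)
  have e1: "enumerate (run_starts K) 1 = 1" using eSuc[OF K, of 0] e0[of K] K
    by (simp add: is_K13_def)
  have K1: "K 1 = 3" using K_e[OF K, of 1] e1 by simp
  have p2: "map K [0..<2] = [1,3]" using K K1 by (simp add: is_K13_def upt_rec)
  have g4: "gen [1,3] 1 = [1,3,3,3]" by (simp add: gen_Cons numeral_3_eq_3)
  have l4: "length [1,3,3,3::nat] = 4" by simp
  have h4: "[1,3,3,3] = map K [0..<length [1,3,3,3::nat]]"
    using gen_prefix'[OF K p2[symmetric]] unfolding g4 .
  have p4: "map K [0..<4] = [1,3,3,3]" using h4[unfolded l4] by (rule sym)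
  have g10: "gen [1,3,3,3] 1 = [1,3,3,3,1,1,1,3,3,3]" by (simp add: gen_Cons numeral_3_eq_3)
  have l10: "length [1,3,3,3,1,1,1,3,3,3::nat] = 10" by simp
  have h10: "[1,3,3,3,1,1,1,3,3,3] = map K [0..<length [1,3,3,3,1,1,1,3,3,3::nat]]"
    using gen_prefix'[OF K p4[symmetric]] unfolding g10 .
  have p10: "map K [0..<10] = [1,3,3,3,1,1,1,3,3,3]" using h10[unfolded l10] by (rule sym)
  have t5: "take 5 [0..<10] = [0..<5::nat]" by (simp add: take_upt del: upt_Suc)
  have "take 5 (map K [0..<10]) = [1,3,3,3,1]" unfolding p10 by simp
  then have p5: "map K [0..<5] = [1,3,3,3,1]" unfolding take_map t5 .
  have B1: "B 1 = gen [1,3,3,3,1] 1" by (simp add: B_def)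
  have i: "B n = map K [0..<length (B n)]" if "n \<ge> 1" for n
    using that
  proof (induction n rule: dec_induct)
    case base then show ?case using gen_prefix'[OF K p5[symmetric]] B1 by simp
  next
    case (step n) then show ?case using ii[of n] gen_prefix'[OF K, of "B n"] by metis
  qed
  have len: "length (B n) \<ge> n" if "n \<ge> 1" for n
    using that
  proof (induction n rule: dec_induct)
    case base then show ?case by (simp add: B_def gen_def)
  next
    case (step n)
    obtain b p where bp: "bp (n - 1) = (b, p)" by fastforce
    have "odd (length p)" using bp_props[of "n - 1"] bp by simp
    then have "length p \<ge> 1" by (cases p) auto
    moreover have "B (Suc n) = b @ p @ b" using step(1) bp
      by (cases n) (auto simp: B_def)
    moreover have "B n = b" using bp by (simp add: B_def)
    ultimately show ?case using step by simp
  qed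
  show ?thesis
  proof (intro conjI allI impI)
    fix n :: nat assume "n \<ge> 1"
    then show "B n = map K [0..<length (B n)]" "B (Suc n) = gen (B n) 1"
      using i ii by simp_all
  next
    fix j
    show "\<exists>N. \<forall>n\<ge>N. j < length (B n) \<and> B n ! j = K j"
    proof (intro exI allI impI)
      fix n assume "Suc j \<le> n"
      then have "j < length (B n)" "n \<ge> 1" using len[of n] by auto
      moreover have "B n ! j = map K [0..<length (B n)] ! j"
        using i[OF \<open>n \<ge> 1\<close>] by (rule arg_cong[of _ _ "\<lambda>L. L ! j"])
      moreover have "map K [0..<length (B n)] ! j = K j" using \<open>j < length (B n)\<close> by simp
      ultimately show "j < length (B n) \<and> B n ! j = K j" by simp
    qed
  qed
qed

end
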